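(* For a (real or complex) variable $z$ and integers $K\ge0$ let $b_K(z)=\sum_{k=0}^{K}C_k\binom{K+k}{K-k}z^k$, where $C_k=\frac{1}{k+1}\binom{2k}{k}$ are the Catalan numbers. Then for $K\ge2$, $$(K+1)b_K(z)=(2K-1)(1+2z)b_{K-1}(z)-(K-2)b_{K-2}(z),$$ and for $K\ge0$, $$b_{K+1}(z)=b_K(z)+z\sum_{l=0}^{K}b_l(z)b_{K-l}(z),$$ with $b_0(z)=1$ and $b_1(z)=1+z$. *)

theory Defs
  imports Complex_Main
begin

definition catalan :: "nat \<Rightarrow> nat" where
  "catalan k = ((2*k) choose k) div (k+1)"

definition bK :: "nat \<Rightarrow> complex \<Rightarrow> complex" where
  "bK K z = (\<Sum>k=0..K. of_nat (catalan k) * of_nat ((K+k) choose (K-k)) * z ^ k)"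

end

theory Submission
  imports Defs "HOL-Computational_Algebra.Formal_Power_Series" "HOL-Computational_Algebra.Polynomial"
begin


unbundle fps_syntax

lemma cat_aux: "(k+1) * ((2*k) choose (k+1)) = k * ((2*k) choose k)"
proof (cases k)
  case 0 then show ?thesis by simp
next
  case (Suc j)
  have "Suc k * (Suc (k + j) choose Suc k) = Suc j * (Suc (k + j) choose k)"
    by (rule Suc_times_binomial_add)
  moreover have "Suc (k+j) = 2*k" using Suc by simp
  ultimately show ?thesis using Suc by (metis Suc_eq_plus1)
qed

lemma catalan_mult: "(k+1) * catalan k = (2*k) choose k"
proof -
  have le: "(2*k) choose (k+1) \<le> (2*k) choose k"
  proof -
    have "(k+1) * ((2*k) choose (k+1)) \<le> (k+1) * ((2*k) choose k)"
      using cat_aux by simp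
    then show ?thesis by (metis mult_le_cancel1 add_gr_0 zero_less_one)
  qed
  have "(k+1) * ((2*k choose k) - (2*k choose (k+1))) = (2*k) choose k"
    using cat_aux le by (simp add: diff_mult_distrib2 algebra_simps)
  then have "(k+1) dvd ((2*k) choose k)" by (metis dvd_triv_left)
  then show ?thesis unfolding catalan_def by (metis dvd_mult_div_cancel)
qed

lemma catalan_0 [simp]: "catalan 0 = 1" by (simp add: catalan_def)

lemma catalan_Suc: "(k+2) * catalan (k+1) = 2*(2*k+1) * catalan k"
proof -
  have a: "Suc k * (Suc (Suc (2*k)) choose Suc k) = Suc (Suc (2*k)) * (Suc (2*k) choose k)"
    by (rule Suc_times_binomial)
  have b: "Suc (2*k) * (2*k choose k) = (Suc (2*k) choose Suc k) * Suc k"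
    by (rule Suc_times_binomial_eq)
  have c: "Suc (2*k) choose Suc k = Suc (2*k) choose k"
    using binomial_symmetric[of k "Suc (2*k)"] by simp
  have "(k+1) * ((k+2) * catalan (k+1)) = (k+1) * (2*(2*k+1) * catalan k)"
  proof -
    have "(k+1) * ((k+2) * catalan (k+1)) = (k+1) * ((2*(k+1)) choose (k+1))"
      using catalan_mult[of "k+1"] by (simp add: ac_simps)
    also have "\<dots> = 2*(2*k+1) * ((2*k) choose k)"
    proof -
      have "(k+1) * ((2*(k+1)) choose (k+1)) = Suc k * (Suc (Suc (2*k)) choose Suc k)" by simp
      also have "\<dots> = Suc (Suc (2*k)) * (Suc (2*k) choose Suc k)" using a c by (simp del: binomial_Suc_Suc)
      also have "\<dots> = 2 * ((Suc (2*k) choose Suc k) * Suc k)" by (simp del: binomial_Suc_Suc)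
      also have "\<dots> = 2*(2*k+1) * ((2*k) choose k)" using b by (simp del: binomial_Suc_Suc)
      finally show ?thesis .
    qed
    also have "\<dots> = (k+1) * (2*(2*k+1) * catalan k)"
      unfolding catalan_mult[of k, symmetric] by (simp only: ac_simps)
    finally show ?thesis .
  qed
  then show ?thesis by (metis mult_left_cancel add_gr_0 zero_less_one less_numeral_extra(3))
qed

definition gser :: "real fps" where "gser = Abs_fps (\<lambda>n. ((1/2) gchoose n) * (-4)^n)"
definition cser :: "real fps" where "cser = Abs_fps (\<lambda>n. real (catalan n))"

lemma gchoose_step: "(a::real) gchoose (Suc k) = (a gchoose k) * (a - of_nat k) / of_nat (Suc k)"
proof -
  have "fact (Suc k) * (a gchoose Suc k) = (\<Prod>i = 0..<Suc k. a - of_nat i)"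
    by (rule gbinomial_mult_fact)
  also have "\<dots> = (\<Prod>i = 0..<k. a - of_nat i) * (a - of_nat k)" by simp
  also have "\<dots> = fact k * (a gchoose k) * (a - of_nat k)"
    by (simp add: gbinomial_mult_fact)
  finally have "fact (Suc k) * (a gchoose Suc k) = fact k * (a gchoose k) * (a - of_nat k)" .
  then have "fact k * ((a gchoose Suc k) * of_nat (Suc k)) = fact k * ((a gchoose k) * (a - of_nat k))"
    by (simp only: fact_Suc ac_simps)
  then have "(a gchoose Suc k) * of_nat (Suc k) = (a gchoose k) * (a - of_nat k)"
    by (metis fact_nonzero mult_left_cancel)
  then show ?thesis by (simp add: eq_divide_eq del: of_nat_Suc)
qed

lemma gser_nth: "((1/2::real) gchoose (Suc m)) * (-4)^(Suc m) = -2 * real (catalan m)"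
proof (induction m)
  case 0 then show ?case by simp
next
  case (Suc m)
  have "((1/2::real) gchoose (Suc (Suc m))) * (-4)^(Suc (Suc m))
      = (((1/2::real) gchoose (Suc m)) * (-4)^(Suc m)) * ((1/2 - real (Suc m)) * (-4) / real (Suc (Suc m)))"
    by (subst gchoose_step) (simp add: field_simps)
  also have "\<dots> = -2 * real (catalan m) * (2*(2*real m+1) / (real m + 2))"
    unfolding Suc.IH by (simp add: field_simps)
  also have "\<dots> = -2 * real (catalan (Suc m))"
  proof -
    have "real ((m+2) * catalan (m+1)) = real (2*(2*m+1) * catalan m)"
      using catalan_Suc[of m] by presburger
    then have "(real m + 2) * real (catalan (Suc m)) = 2*(2*real m+1) * real (catalan m)"
      by (simp add: algebra_simps)
    then show ?thesis by (simp add: field_simps)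
  qed
  finally show ?case .
qed

lemma gser_eq: "gser = 1 - 2 * fps_X * cser"
proof (rule fps_ext)
  fix n show "gser $ n = (1 - 2 * fps_X * cser) $ n"
  proof (cases n)
    case 0 then show ?thesis by (simp add: gser_def cser_def)
  next
    case (Suc m)
    have "(2 * fps_X * cser) $ Suc m = 2 * cser $ m"
      by (simp add: mult.assoc numeral_fps_const)
    then show ?thesis using Suc gser_nth[of m] by (simp add: gser_def cser_def)
  qed
qed

lemma gser_sq: "gser * gser = 1 - 4 * fps_X"
proof (rule fps_ext)
  fix n
  have "(gser * gser) $ n = (\<Sum>i=0..n. ((1/2::real) gchoose i) * ((1/2) gchoose (n-i)) * (-4)^n)"
    unfolding fps_mult_nth gser_def
    by (rule sum.cong) (auto simp: power_add[symmetric])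
  also have "\<dots> = (fps_binomial (1/2) * fps_binomial (1/2)) $ n * (-4)^n"
    by (simp add: fps_mult_nth sum_distrib_right)
  also have "fps_binomial (1/2) * fps_binomial (1/2) = fps_binomial (1::real)"
    using fps_binomial_add_mult[of "1/2::real" "1/2"] by simp
  also have "fps_binomial (1::real) $ n * (-4)^n = (1 - 4 * fps_X) $ n"
    using binomial_gbinomial[of 1 n, where 'a=real]
    by (cases n; cases "n - 1") (auto simp: fps_numeral_nth)
  finally show "(gser * gser) $ n = (1 - 4 * fps_X) $ n" .
qed

lemma catalan_conv: "catalan (Suc m) = (\<Sum>i\<le>m. catalan i * catalan (m - i))"
proof -
  have "(1 - 2 * fps_X * cser) * (1 - 2 * fps_X * cser) = 1 - 4 * fps_X"
    using gser_sq gser_eq by simp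
  then have "4 * fps_X * (fps_X * cser * cser - cser + 1) = (0::real fps)"
    by (simp add: algebra_simps)
  then have e: "fps_X * cser * cser - cser + 1 = 0" by simp
  have "(fps_X * cser * cser - cser + 1) $ Suc m = 0" using e by simp
  then have "(cser * cser) $ m = cser $ Suc m"
    by (simp add: mult.assoc)
  then have "real (catalan (Suc m)) = (\<Sum>i=0..m. real (catalan i) * real (catalan (m-i)))"
    by (simp add: fps_mult_nth cser_def)
  then have "real (catalan (Suc m)) = real (\<Sum>i\<le>m. catalan i * catalan (m - i))"
    by (simp add: atLeast0AtMost)
  then show ?thesis by (simp only: of_nat_eq_iff)
qed



lemma vand: "(\<Sum>q\<le>n. (q choose a) * ((n-q) choose b)) = Suc n choose (a+b+1)"
proof (induction n arbitrary: b)
  case 0 then show ?case by (cases a; cases b) auto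
next
  case (Suc n)
  show ?case
  proof (cases b)
    case 0
    then show ?thesis using sum_choose_upper[where n="Suc n" and m=a] by (simp del: sum.atMost_Suc binomial_Suc_Suc)
  next
    case (Suc b')
    have "(\<Sum>q\<le>Suc n. (q choose a) * ((Suc n-q) choose b))
        = (\<Sum>q\<le>n. (q choose a) * ((Suc n-q) choose b))"
      using Suc by simp
    also have "\<dots> = (\<Sum>q\<le>n. (q choose a) * ((n-q) choose b') + (q choose a) * ((n-q) choose b))"
      by (rule sum.cong) (auto simp: Suc Suc_diff_le algebra_simps)
    also have "\<dots> = (Suc n choose (a+b'+1)) + (Suc n choose (a+b+1))"
      by (simp add: sum.distrib Suc.IH)
    also have "\<dots> = Suc (Suc n) choose (a+b+1)" using Suc by simp
    finally show ?thesis .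
  qed
qed

lemma vand2: "(\<Sum>l\<le>K. ((l+i) choose (2*i)) * ((K-l+j) choose (2*j))) = (K+i+j+1) choose (2*i+2*j+1)"
proof -
  define F where "F q = (q choose (2*i)) * ((K+i+j-q) choose (2*j))" for q
  have "(\<Sum>l\<le>K. ((l+i) choose (2*i)) * ((K-l+j) choose (2*j))) = (\<Sum>l=0..K. F (l+i))"
    by (auto simp: F_def atLeast0AtMost intro!: sum.cong)
  also have "\<dots> = (\<Sum>q=0+i..K+i. F q)"
    by (rule sum.shift_bounds_cl_nat_ivl[symmetric])
  also have "\<dots> = (\<Sum>q\<le>K+i+j. F q)"
  proof (rule sum.mono_neutral_left)
    show "\<forall>q\<in>{..K+i+j} - {0+i..K+i}. F q = 0"
    proof
      fix q assume q: "q \<in> {..K+i+j} - {0+i..K+i}"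
      show "F q = 0"
      proof (cases "q < i")
        case True then show ?thesis by (simp add: F_def)
      next
        case False
        then have "K+i < q" "q \<le> K+i+j" using q by auto
        then have "K+i+j-q < 2*j" by linarith
        then show ?thesis by (simp add: F_def)
      qed
    qed
  qed auto
  also have "\<dots> = (K+i+j+1) choose (2*i+2*j+1)"
    unfolding F_def using vand[where n="K+i+j" and a="2*i" and b="2*j"] by simp
  finally show ?thesis .
qed

definition A :: "nat \<Rightarrow> nat \<Rightarrow> nat" where "A K k = catalan k * ((K+k) choose (2*k))"

lemma A_zero: "K < k \<Longrightarrow> A K k = 0" by (simp add: A_def)
lemma A_0 [simp]: "A K 0 = 1" by (simp add: A_def)

lemma conv_nat: "A (Suc K) (Suc m) = A K (Suc m) + (\<Sum>l\<le>K. \<Sum>i\<le>m. A l i * A (K-l) (m-i))"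
proof -
  have "(\<Sum>l\<le>K. \<Sum>i\<le>m. A l i * A (K-l) (m-i))
      = (\<Sum>i\<le>m. \<Sum>l\<le>K. catalan i * catalan (m-i) * (((l+i) choose (2*i)) * ((K-l+(m-i)) choose (2*(m-i)))))"
    by (subst sum.swap) (auto simp: A_def ac_simps intro!: sum.cong)
  also have "\<dots> = (\<Sum>i\<le>m. catalan i * catalan (m-i) * ((K+m+1) choose (2*m+1)))"
  proof (rule sum.cong)
    fix i assume "i \<in> {..m}"
    then have e1: "K+i+(m-i)+1 = K+m+1" and e2: "2*i+2*(m-i)+1 = 2*m+1" by auto
    have v: "(\<Sum>l\<le>K. ((l+i) choose (2*i)) * ((K-l+(m-i)) choose (2*(m-i)))) = (K+m+1) choose (2*m+1)"
      using vand2[where K=K and i=i and j="m-i"] unfolding e1 e2 .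
    show "(\<Sum>l\<le>K. catalan i * catalan (m-i) * (((l+i) choose (2*i)) * ((K-l+(m-i)) choose (2*(m-i)))))
        = catalan i * catalan (m-i) * ((K+m+1) choose (2*m+1))"
      by (simp only: sum_distrib_left[symmetric] v)
  qed simp
  also have "\<dots> = catalan (Suc m) * ((K+m+1) choose (2*m+1))"
    by (simp add: catalan_conv sum_distrib_right)
  finally have e: "(\<Sum>l\<le>K. \<Sum>i\<le>m. A l i * A (K-l) (m-i)) = catalan (Suc m) * ((K+m+1) choose (2*m+1))" .
  have "A (Suc K) (Suc m) = catalan (Suc m) * (Suc (K+m+1) choose Suc (2*m+1))"
    by (simp add: A_def)
  also have "\<dots> = A K (Suc m) + catalan (Suc m) * ((K+m+1) choose (2*m+1))"
    by (simp only: binomial_Suc_Suc) (simp add: A_def algebra_simps)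
  finally show ?thesis using e by simp
qed



lemma rec_main:
  fixes s d :: nat
  defines "n \<equiv> s + d"
  shows "(n+3) * A (n+2) (Suc s) + n * A n (Suc s) = (2*n+3) * (A (n+1) (Suc s) + 2 * A (n+1) s)"
proof -
  define T where "T = (n+s+3) choose (2*s+2)"
  define U where "U = (n+s+2) choose (2*s+2)"
  define V where "V = (n+s+1) choose (2*s+2)"
  define W where "W = (n+s+1) choose (2*s)"
  define c where "c = catalan (Suc s)"
  define c' where "c' = catalan s"
  have e1: "n+s+3 - (2*s+2) = d+1" "n+s+3-1 = n+s+2" "n+s+3 = 2*s+d+3" unfolding n_def by auto
  have "(n+s+3 - (2*s+2)) * T = (n+s+3) * U"
    using binomial_absorb_comp[of "n+s+3" "2*s+2"] unfolding e1(2) T_def[symmetric] U_def[symmetric] .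
  then have R1: "(2*s+d+3) * U = (d+1) * T" unfolding e1(1) e1(3) by simp
  have R2: "(2*s+d+2) * V = d * U"
    using binomial_absorb_comp[of "n+s+2" "2*s+2"] unfolding V_def U_def n_def
    by (simp add: ac_simps)
  have R3a: "(2*s+2) * T = (n+s+3) * ((n+s+2) choose (2*s+1))"
  proof -
    have e: "Suc (2*s+1) = 2*s+2" "Suc (n+s+2) = n+s+3" by auto
    show ?thesis using Suc_times_binomial[of "2*s+1" "n+s+2"] unfolding T_def e .
  qed
  have R3b: "(2*s+1) * ((n+s+2) choose (2*s+1)) = (n+s+2) * W"
    using Suc_times_binomial[of "2*s" "n+s+1"] unfolding W_def by (simp add: ac_simps)
  have R3: "(2*s+d+3) * (2*s+d+2) * W = (2*s+2)*(2*s+1) * T"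
  proof -
    have "(2*s+2)*(2*s+1) * T = (2*s+1) * ((2*s+2) * T)" by (simp only: ac_simps)
    also have "\<dots> = (n+s+3) * ((2*s+1) * ((n+s+2) choose (2*s+1)))" unfolding R3a by (simp only: ac_simps)
    also have "\<dots> = (n+s+3) * (n+s+2) * W" unfolding R3b by (simp only: ac_simps)
    finally show ?thesis unfolding n_def by (simp add: ac_simps)
  qed
  have Cat: "(s+2) * c = 2*(2*s+1) * c'"
    using catalan_Suc[of s] unfolding c_def c'_def by simp
  have eqs: "n+2+Suc s = n+s+3" "2*Suc s = 2*s+2" "n+Suc s = n+s+1" "n+1+Suc s = n+s+2" "n+1+s = n+s+1"
    by auto
  have a1: "A (n+2) (Suc s) = c*T" unfolding A_def c_def T_def eqs ..
  have a2: "A n (Suc s) = c*V" unfolding A_def c_def V_def eqs ..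
  have a3: "A (n+1) (Suc s) = c*U" unfolding A_def c_def U_def eqs ..
  have a4: "A (n+1) s = c'*W" unfolding A_def c'_def W_def eqs ..
  have goalA: "(n+3) * A (n+2) (Suc s) + n * A n (Suc s) = (n+3)*c*T + n*c*V"
    unfolding a1 a2 by (simp only: ac_simps)
  have goalB: "A (n+1) (Suc s) + 2 * A (n+1) s = c*U + 2*c'*W"
    unfolding a3 a4 by (simp only: ac_simps)
  have E1: "(2*real s+real d+3)*real U = (real d+1)*real T"
    using arg_cong[OF R1, of real] by (simp add: algebra_simps)
  have E2: "(2*real s+real d+2)*real V = real d*real U"
    using arg_cong[OF R2, of real] by (simp add: algebra_simps)
  have E3: "(2*real s+real d+3)*(2*real s+real d+2)*real W = (2*real s+2)*(2*real s+1)*real T"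
    using arg_cong[OF R3, of real] by (simp add: algebra_simps)
  have E4: "(real s+2)*real c = 2*(2*real s+1)*real c'"
    using arg_cong[OF Cat, of real] by (simp add: algebra_simps)
  define P where "P = (2*real s+real d+3)*(2*real s+real d+2)*(2*real s+1)"
  have Pnz: "P \<noteq> 0" unfolding P_def
    by (simp only: mult_eq_0_iff de_Morgan_disj) (intro conjI; linarith)
  have "P * ((real s+real d+3)*real c*real T + (real s+real d)*real c*real V)
      = P * ((2*real s+2*real d+3) * (real c*real U + 2*real c'*real W))"
    unfolding P_def using E1 E2 E3 E4 by algebra
  then have "(real s+real d+3)*real c*real T + (real s+real d)*real c*real V
      = (2*real s+2*real d+3) * (real c*real U + 2*real c'*real W)"
    using Pnz by simp
  then have "real ((n+3)*c*T + n*c*V) = real ((2*n+3) * (c*U + 2*c'*W))"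
    unfolding n_def by (simp add: algebra_simps)
  then have "(n+3)*c*T + n*c*V = (2*n+3) * (c*U + 2*c'*W)" by (simp only: of_nat_eq_iff)
  then show ?thesis unfolding goalA goalB .
qed



lemma rec_nat: "(n+3) * A (n+2) k + n * A n k = (2*n+3) * (A (n+1) k + (case k of 0 \<Rightarrow> 0 | Suc s \<Rightarrow> 2 * A (n+1) s))"
proof (cases k)
  case 0 then show ?thesis by simp
next
  case (Suc s)
  show ?thesis
  proof (cases "s \<le> n")
    case True
    then obtain d where "n = s + d" using le_Suc_ex by blast
    then show ?thesis using rec_main[of s d] Suc by simp
  next
    case False
    show ?thesis
    proof (cases "s = n+1")
      case True
      have "A (n+2) (Suc s) = catalan (n+2)" "A n (Suc s) = 0" "A (n+1) (Suc s) = 0"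
           "A (n+1) s = catalan (n+1)"
      proof -
        have e: "n+2+Suc s = 2*Suc s" "n+1+s = 2*s" using True by auto
        show "A (n+2) (Suc s) = catalan (n+2)" unfolding A_def e using True by simp
        show "A n (Suc s) = 0" using True by (simp add: A_zero)
        show "A (n+1) (Suc s) = 0" using True by (simp add: A_zero)
        show "A (n+1) s = catalan (n+1)" unfolding A_def e using True by simp
      qed
      then show ?thesis using Suc True catalan_Suc[of "n+1"] by (simp add: algebra_simps)
    next
      case False
      then have "n+1 < s" using \<open>\<not> s \<le> n\<close> by simp
      then show ?thesis using Suc by (simp add: A_zero)
    qed
  qed
qed

definition P :: "nat \<Rightarrow> complex poly" where
  "P K = (\<Sum>k\<le>K. monom (of_nat (A K k)) k)"

lemma coeff_P: "coeff (P K) n = of_nat (A K n)"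
  by (auto simp: P_def coeff_sum coeff_monom A_zero)

lemma poly_P: "poly (P K) z = bK K z"
proof -
  have "poly (P K) z = (\<Sum>k\<le>K. of_nat (A K k) * z^k)"
    by (simp add: P_def poly_sum poly_monom)
  also have "\<dots> = bK K z"
    unfolding bK_def atLeast0AtMost
  proof (rule sum.cong)
    fix k assume "k \<in> {..K}"
    then have "(K+k) choose (K-k) = (K+k) choose (2*k)"
      using binomial_symmetric[of "2*k" "K+k"] by simp
    then show "of_nat (A K k) * z^k = of_nat (catalan k) * of_nat ((K+k) choose (K-k)) * z^k"
      by (simp add: A_def)
  qed simp
  finally show ?thesis .
qed

lemma P_conv: "P (K+1) = P K + pCons 0 (\<Sum>l\<le>K. P l * P (K-l))"
proof (rule poly_eqI)
  fix n show "coeff (P (K+1)) n = coeff (P K + pCons 0 (\<Sum>l\<le>K. P l * P (K-l))) n"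
  proof (cases n)
    case 0 then show ?thesis by (simp add: coeff_P)
  next
    case (Suc m)
    have "coeff (P (K+1)) n = of_nat (A (Suc K) (Suc m))" using Suc by (simp add: coeff_P)
    also have "\<dots> = of_nat (A K (Suc m)) + (\<Sum>l\<le>K. \<Sum>i\<le>m. of_nat (A l i) * of_nat (A (K-l) (m-i)))"
      unfolding conv_nat by simp
    also have "\<dots> = coeff (P K + pCons 0 (\<Sum>l\<le>K. P l * P (K-l))) n"
      using Suc by (simp add: coeff_P coeff_sum coeff_mult)
    finally show ?thesis .
  qed
qed

lemma P_rec: "smult (of_nat (n+3)) (P (n+2)) + smult (of_nat n) (P n)
   = smult (of_nat (2*n+3)) (P (n+1) + smult 2 (pCons 0 (P (n+1))))"
proof (rule poly_eqI)
  fix k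
  have "of_nat ((n+3) * A (n+2) k + n * A n k) = (of_nat ((2*n+3) * (A (n+1) k + (case k of 0 \<Rightarrow> 0 | Suc s \<Rightarrow> 2 * A (n+1) s))) :: complex)"
    unfolding rec_nat ..
  then show "coeff (smult (of_nat (n+3)) (P (n+2)) + smult (of_nat n) (P n)) k
     = coeff (smult (of_nat (2*n+3)) (P (n+1) + smult 2 (pCons 0 (P (n+1))))) k"
    by (cases k) (simp_all add: coeff_P coeff_pCons)
qed

theorem lemma4:
  fixes z :: complex
  shows "(\<forall>K\<ge>2. of_nat (K+1) * bK K z
            = of_nat (2*K-1) * (1 + 2*z) * bK (K-1) z - of_nat (K-2) * bK (K-2) z)
       \<and> (\<forall>K. bK (K+1) z = bK K z + z * (\<Sum>l=0..K. bK l z * bK (K-l) z))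
       \<and> bK 0 z = 1 \<and> bK 1 z = 1 + z"
proof (intro conjI allI impI)
  fix K :: nat assume "K \<ge> 2"
  then obtain n where K: "K = n + 2" using le_Suc_ex by (metis add.commute)
  have "poly (smult (of_nat (n+3)) (P (n+2)) + smult (of_nat n) (P n)) z
     = poly (smult (of_nat (2*n+3)) (P (n+1) + smult 2 (pCons 0 (P (n+1))))) z"
    unfolding P_rec ..
  then have "of_nat (n+3) * bK (n+2) z + of_nat n * bK n z = of_nat (2*n+3) * (bK (n+1) z + 2 * (z * bK (n+1) z))"
    by (simp add: poly_P)
  then show "of_nat (K+1) * bK K z
            = of_nat (2*K-1) * (1 + 2*z) * bK (K-1) z - of_nat (K-2) * bK (K-2) z"
    unfolding K by (simp add: algebra_simps eq_diff_eq)
next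
  fix K
  have "poly (P (K+1)) z = poly (P K + pCons 0 (\<Sum>l\<le>K. P l * P (K-l))) z"
    unfolding P_conv ..
  then show "bK (K+1) z = bK K z + z * (\<Sum>l=0..K. bK l z * bK (K-l) z)"
    by (simp add: poly_P poly_sum atLeast0AtMost)
next
  show "bK 0 z = 1" by (simp add: bK_def)
  have "2 * catalan 1 = 2" using catalan_mult[of 1] by simp
  then have c1: "catalan (Suc 0) = 1" by simp
  show "bK 1 z = 1 + z" by (simp add: bK_def c1)
qed


end
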